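(* Let $Q\in\mathbb R^{m\times n}$ with $\mathrm{rank}(Q)=n$, $p\in\mathbb R^m$, $r>0$, and $\mathcal S=\{x\in\mathbb R^n:\|Qx-p\|_2\le r\}$ with $\mathcal S\cap\mathbb Z^n\neq\emptyset$. Let $\hat x$ be a boundary point of $\mathcal S$. Then $$\min_{x\in\mathcal S\cap\mathbb Z^n}\|x-\hat x\|_2\le 2\,\|Q(Q^TQ)^{-1}\|_2\,\mu(Q).$$ Moreover, for every $\alpha\in\mathbb R^n$, $$\min_{x\in\mathcal S\cap\mathbb Z^n}\alpha^Tx-\min_{x\in\mathcal S}\alpha^Tx\le 2\,\|Q(Q^TQ)^{-1}\|_2\,\|\alpha\|_2\,\mu(Q).$$
   Context: For $Q\in\mathbb R^{m\times n}$ of full column rank, $\mu(Q)$ denotes the covering radius of the lattice $Q\mathbb Z^n$: $\mu(Q)=\max_{x\in\mathbb R^n}\min_{z\in\mathbb Z^n}\|Qx-Qz\|_2$. $\|\cdot\|_2$ applied to a matrix is the spectral (operator) norm. *)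

theory Defs
  imports "HOL-Analysis.Analysis"
begin

definition int_vecs :: "(real ^ 'n) set" where
  "int_vecs = {z. \<forall>i. z $ i \<in> \<int>}"

definition covering_radius :: "real ^ 'n ^ 'm \<Rightarrow> real" where
  "covering_radius Q = (SUP x. INF z\<in>int_vecs. norm (Q *v x - Q *v z))"

definition spec_norm :: "real ^ 'n ^ 'm \<Rightarrow> real" where
  "spec_norm M = onorm (\<lambda>x. M *v x)"

end

theory Submission
  imports Defs
begin

lemma inv_props:
  fixes A :: "real^'n^'n"
  assumes "invertible A"
  shows "A ** matrix_inv A = mat 1 \<and> matrix_inv A ** A = mat 1"
  using assms unfolding invertible_def matrix_inv_def by (rule someI_ex)

lemma gram_invertible:
  fixes Q :: "real ^ 'n ^ 'm"
  assumes "rank Q = CARD('n)"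
  shows "invertible (transpose Q ** Q)"
proof -
  have inj: "inj ((*v) Q)" using assms full_rank_injective by blast
  have "inj ((*v) (transpose Q ** Q))"
  proof (rule injI)
    fix x y assume "(transpose Q ** Q) *v x = (transpose Q ** Q) *v y"
    hence "(transpose Q ** Q) *v (x - y) = 0" by (simp add: algebra_simps)
    hence "transpose Q *v (Q *v (x - y)) = 0" by (simp add: matrix_vector_mul_assoc)
    hence "inner (x - y) (transpose Q *v (Q *v (x - y))) = 0" by simp
    hence "inner (Q *v (x - y)) (Q *v (x - y)) = 0"
      by (metis dot_lmul_matrix vector_transpose_matrix transpose_transpose inner_commute)
    hence "Q *v (x - y) = 0" by simp
    hence "Q *v x = Q *v y" by (simp add: algebra_simps)
    thus "x = y" using inj by (simp add: inj_eq)
  qed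
  then obtain B where "B ** (transpose Q ** Q) = mat 1"
    using matrix_left_invertible_injective by blast
  thus ?thesis using invertible_left_inverse by blast
qed

lemma spec_bound:
  fixes M :: "real ^ 'n ^ 'm"
  shows "norm (M *v x) \<le> spec_norm M * norm x"
  unfolding spec_norm_def by (rule onorm) simp

lemma spec_nonneg:
  fixes M :: "real ^ 'n ^ 'm"
  shows "0 \<le> spec_norm M"
  unfolding spec_norm_def by (rule onorm_pos_le) simp

lemma pinv_bound:
  fixes Q :: "real ^ 'n ^ 'm"
  assumes "rank Q = CARD('n)"
  shows "norm v \<le> spec_norm (Q ** matrix_inv (transpose Q ** Q)) * norm (Q *v v)"
proof -
  define A where "A = transpose Q ** Q"
  define Ai where "Ai = matrix_inv A"
  define B where "B = Q ** Ai"
  have inv: "A ** Ai = mat 1" "Ai ** A = mat 1"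
    using inv_props[OF gram_invertible[OF assms]] unfolding A_def Ai_def by auto
  have symA: "transpose A = A" unfolding A_def by (simp add: matrix_transpose_mul)
  have "transpose Ai ** A = mat 1"
    by (metis inv(1) matrix_transpose_mul symA transpose_mat)
  hence symAi: "transpose Ai = Ai"
    by (metis inv(1) matrix_mul_assoc matrix_mul_lid matrix_mul_rid)
  have tB: "transpose B = Ai ** transpose Q"
    unfolding B_def by (simp add: matrix_transpose_mul symAi)
  define w where "w = Q *v v"
  have "v = Ai *v (A *v v)" by (simp add: matrix_vector_mul_assoc inv)
  also have "\<dots> = transpose B *v w" unfolding tB A_def w_def by (simp add: matrix_vector_mul_assoc matrix_mul_assoc)
  finally have v: "v = w v* B" by simp
  have "norm v ^ 2 = inner v v" by (simp add: power2_norm_eq_inner)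
  also have "\<dots> = inner w (B *v v)" by (subst (1) v) (simp add: dot_lmul_matrix)
  also have "\<dots> \<le> norm w * norm (B *v v)" by (rule norm_cauchy_schwarz)
  also have "\<dots> \<le> norm w * (spec_norm B * norm v)"
    by (rule mult_left_mono[OF spec_bound]) simp
  finally have h: "norm v * norm v \<le> (spec_norm B * norm w) * norm v"
    by (simp add: power2_eq_square algebra_simps)
  show ?thesis
  proof (cases "v = 0")
    case True thus ?thesis using spec_nonneg by simp
  next
    case False
    thus ?thesis using h unfolding B_def Ai_def A_def w_def
      by (metis mult_le_cancel_right zero_less_norm_iff not_less)
  qed
qed

lemma center:
  fixes Q :: "real ^ 'n ^ 'm" and p :: "real ^ 'm"
  assumes rank: "rank Q = CARD('n)"
    and S_def: "S = {x. norm (Q *v x - p) \<le> r}"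
    and nonempty: "S \<noteq> {}"
  obtains c R where "R \<ge> 0" "\<And>y. y \<in> S \<longleftrightarrow> norm (Q *v (y - c)) \<le> R"
proof -
  define A where "A = transpose Q ** Q"
  define Ai where "Ai = matrix_inv A"
  have inv: "A ** Ai = mat 1" "Ai ** A = mat 1"
    using inv_props[OF gram_invertible[OF rank]] unfolding A_def Ai_def by auto
  define c where "c = Ai *v (transpose Q *v p)"
  have "A *v c = transpose Q *v p" unfolding c_def
    by (simp add: matrix_vector_mul_assoc inv)
  hence orth0: "transpose Q *v (Q *v c - p) = 0"
    unfolding A_def by (simp add: matrix_vector_mul_assoc algebra_simps)
  define d where "d = Q *v c - p"
  have pyth: "norm (Q *v y - p) ^ 2 = norm (Q *v (y - c)) ^ 2 + norm d ^ 2" for y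
  proof -
    have e: "Q *v y - p = Q *v (y - c) + d" unfolding d_def by (simp add: algebra_simps)
    have o: "inner (Q *v (y - c)) d = 0"
    proof -
      have "inner (Q *v (y - c)) d = inner (d v* Q) (y - c)"
        by (simp add: dot_lmul_matrix inner_commute)
      also have "d v* Q = 0" using orth0 unfolding d_def by simp
      finally show ?thesis by simp
    qed
    show ?thesis unfolding e power2_norm_eq_inner
      using o by (simp add: inner_add_left inner_add_right inner_commute)
  qed
  obtain x0 where "x0 \<in> S" using nonempty by blast
  hence "norm (Q *v x0 - p) \<le> r" using S_def by simp
  hence "norm (Q *v x0 - p) ^ 2 \<le> r ^ 2"
    by (meson norm_ge_zero power_mono)
  hence nn: "r ^ 2 - norm d ^ 2 \<ge> 0" using pyth[of x0] by (smt (verit) zero_le_power2)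
  define R where "R = sqrt (r ^ 2 - norm d ^ 2)"
  have "y \<in> S \<longleftrightarrow> norm (Q *v (y - c)) \<le> R" for y
  proof -
    have r0: "r \<ge> 0" using \<open>norm (Q *v x0 - p) \<le> r\<close> norm_ge_zero order_trans by blast
    have "y \<in> S \<longleftrightarrow> norm (Q *v y - p) \<le> r" using S_def by simp
    also have "\<dots> \<longleftrightarrow> norm (Q *v y - p) ^ 2 \<le> r ^ 2"
      using r0 by (simp add: power_mono_iff)
    also have "\<dots> \<longleftrightarrow> norm (Q *v (y - c)) ^ 2 \<le> r ^ 2 - norm d ^ 2" using pyth[of y] by linarith
    also have "\<dots> \<longleftrightarrow> norm (Q *v (y - c)) \<le> R" unfolding R_def
    proof
      assume "norm (Q *v (y - c)) ^ 2 \<le> r ^ 2 - norm d ^ 2"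
      thus "norm (Q *v (y - c)) \<le> sqrt (r ^ 2 - norm d ^ 2)" by (rule real_le_rsqrt)
    next
      assume "norm (Q *v (y - c)) \<le> sqrt (r ^ 2 - norm d ^ 2)"
      hence "norm (Q *v (y - c)) ^ 2 \<le> sqrt (r ^ 2 - norm d ^ 2) ^ 2"
        by (rule power_mono) simp
      thus "norm (Q *v (y - c)) ^ 2 \<le> r ^ 2 - norm d ^ 2" using nn by simp
    qed
    finally show ?thesis .
  qed
  moreover have "R \<ge> 0" unfolding R_def using nn by simp
  ultimately show ?thesis using that by blast
qed

lemma cr_bdd:
  fixes Q :: "real ^ 'n ^ 'm"
  shows "bdd_above (range (\<lambda>x. INF z\<in>int_vecs. norm (Q *v x - Q *v z)))"
proof (rule bdd_aboveI2)
  fix x :: "real ^ 'n"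
  define zf :: "real ^ 'n" where "zf = (\<chi> i. of_int (floor (x $ i)))"
  have zf: "zf \<in> int_vecs" unfolding int_vecs_def zf_def by simp
  have "(INF z\<in>int_vecs. norm (Q *v x - Q *v z)) \<le> norm (Q *v x - Q *v zf)"
    by (rule cINF_lower[OF _ zf]) (auto intro: bdd_belowI[of _ 0])
  also have "\<dots> = norm (Q *v (x - zf))" by (simp add: algebra_simps)
  also have "\<dots> \<le> spec_norm Q * norm (x - zf)" by (rule spec_bound)
  also have "\<dots> \<le> spec_norm Q * real CARD('n)"
  proof (rule mult_left_mono[OF _ spec_nonneg])
    have "norm (x - zf) \<le> (\<Sum>i\<in>UNIV. \<bar>(x - zf) $ i\<bar>)" by (rule norm_le_l1_cart)
    also have "\<dots> \<le> (\<Sum>i\<in>(UNIV::'n set). 1)"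
      by (rule sum_mono) (simp add: zf_def, linarith)
    finally show "norm (x - zf) \<le> real CARD('n)" by simp
  qed
  finally show "(INF z\<in>int_vecs. norm (Q *v x - Q *v z)) \<le> spec_norm Q * real CARD('n)" .
qed

lemma cr_approx:
  fixes Q :: "real ^ 'n ^ 'm"
  assumes "covering_radius Q < t"
  shows "\<exists>z\<in>int_vecs. norm (Q *v y - Q *v z) < t"
proof -
  have "(INF z\<in>int_vecs. norm (Q *v y - Q *v z)) \<le> covering_radius Q"
    unfolding covering_radius_def by (rule cSUP_upper[OF _ cr_bdd]) simp
  hence "(INF z\<in>int_vecs. norm (Q *v y - Q *v z)) < t" using assms by simp
  moreover have "int_vecs \<noteq> {}" unfolding int_vecs_def by (rule ex_in_conv[THEN iffD1]) (rule exI[of _ 0], simp)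
  moreover have "bdd_below ((\<lambda>z. norm (Q *v y - Q *v z)) ` int_vecs)" by (rule bdd_belowI2[of _ 0]) simp
  ultimately show ?thesis using cINF_less_iff[of int_vecs "\<lambda>z. norm (Q *v y - Q *v z)" t] by blast
qed

lemma cr_nonneg:
  fixes Q :: "real ^ 'n ^ 'm"
  shows "0 \<le> covering_radius Q"
proof -
  have "(INF z\<in>int_vecs. norm (Q *v 0 - Q *v z)) \<le> covering_radius Q"
    unfolding covering_radius_def by (rule cSUP_upper[OF _ cr_bdd]) simp
  moreover have "0 \<in> (int_vecs :: (real^'n) set)" unfolding int_vecs_def by simp
  hence "int_vecs \<noteq> ({} :: (real^'n) set)" by blast
  hence "0 \<le> (INF z\<in>int_vecs. norm (Q *v 0 - Q *v z))"
    by (rule cINF_greatest) simp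
  ultimately show ?thesis by linarith
qed

lemma key:
  fixes Q :: "real ^ 'n ^ 'm" and c :: "real ^ 'n"
  assumes memS: "\<And>y. y \<in> S \<longleftrightarrow> norm (Q *v (y - c)) \<le> R"
    and nonempty: "S \<inter> int_vecs \<noteq> {}"
    and x: "x \<in> S" and t: "covering_radius Q < t"
  shows "\<exists>z\<in>S \<inter> int_vecs. norm (Q *v (z - x)) \<le> 2 * t"
proof (cases "R \<le> t")
  case True
  obtain z0 where z0: "z0 \<in> S \<inter> int_vecs" using nonempty by blast
  have "Q *v (z0 - x) = Q *v (z0 - c) - Q *v (x - c)" by (simp add: algebra_simps)
  hence "norm (Q *v (z0 - x)) \<le> norm (Q *v (z0 - c)) + norm (Q *v (x - c))"
    by (metis norm_triangle_ineq4)
  also have "\<dots> \<le> R + R" using z0 x memS by (auto intro: add_mono)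
  finally show ?thesis using True z0 by force
next
  case False
  define u where "u = Q *v (x - c)"
  have uR: "norm u \<le> R" using x memS u_def by simp
  obtain x' where x'1: "norm (Q *v (x' - c)) \<le> R - t" and x'2: "norm (Q *v (x' - x)) \<le> t"
  proof (cases "norm u \<le> R - t")
    case True
    show ?thesis by (rule that[of x]) (use True u_def t cr_nonneg[of Q] in auto)
  next
    case False2: False
    hence un: "norm u > 0" using \<open>\<not> R \<le> t\<close> by linarith
    define l where "l = (R - t) / norm u"
    have l01: "0 \<le> l" "l \<le> 1" unfolding l_def using False2 \<open>\<not> R \<le> t\<close> un uR by auto
    define x' where "x' = c + l *\<^sub>R (x - c)"
    have e1: "Q *v (x' - c) = l *\<^sub>R u" unfolding x'_def u_def by (simp add: algebra_simps)
    have e2: "Q *v (x' - x) = (l - 1) *\<^sub>R u" unfolding x'_def u_def by (simp add: algebra_simps)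
    have "norm (Q *v (x' - c)) = R - t" unfolding e1 l_def using un \<open>\<not> R \<le> t\<close> by simp
    moreover have "norm (Q *v (x' - x)) = (1 - l) * norm u" unfolding e2 using l01 by simp
    moreover have "(1 - l) * norm u = norm u - (R - t)" unfolding l_def using un by (simp add: field_simps)
    ultimately show ?thesis using that[of x'] uR by simp
  qed
  obtain z where z: "z \<in> int_vecs" and zt: "norm (Q *v x' - Q *v z) < t"
    using cr_approx[OF t] by blast
  have zt': "norm (Q *v (z - x')) \<le> t" using zt by (simp add: algebra_simps norm_minus_commute)
  have "Q *v (z - c) = Q *v (z - x') + Q *v (x' - c)" by (simp add: algebra_simps)
  hence "norm (Q *v (z - c)) \<le> norm (Q *v (z - x')) + norm (Q *v (x' - c))"
    by (metis norm_triangle_ineq)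
  hence "z \<in> S" using memS zt' x'1 by simp
  have "Q *v (z - x) = Q *v (z - x') + Q *v (x' - x)" by (simp add: algebra_simps)
  hence "norm (Q *v (z - x)) \<le> norm (Q *v (z - x')) + norm (Q *v (x' - x))"
    by (metis norm_triangle_ineq)
  hence "norm (Q *v (z - x)) \<le> 2 * t" using zt' x'2 by simp
  thus ?thesis using \<open>z \<in> S\<close> z by blast
qed

lemma eps_le:
  fixes a k mu :: real
  assumes "k \<ge> 0" "\<And>t. mu < t \<Longrightarrow> a \<le> k * t"
  shows "a \<le> k * mu"
proof (rule ccontr)
  assume "\<not> a \<le> k * mu"
  hence a: "a > k * mu" by simp
  show False
  proof (cases "k = 0")
    case True thus False using a assms(2)[of "mu + 1"] by simp
  next
    case False
    hence k: "k > 0" using assms(1) by simp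
    define t where "t = mu + (a - k * mu) / (2 * k)"
    have "mu < t" unfolding t_def using a k by simp
    hence "a \<le> k * t" by (rule assms(2))
    moreover have "k * t = k * mu + (a - k * mu) / 2" unfolding t_def using k by (simp add: field_simps)
    ultimately have "a \<le> k * mu + (a - k * mu) / 2" by simp
    thus False using a by (simp add: field_simps)
  qed
qed

theorem proposition6p1:
  fixes Q :: "real ^ 'n ^ 'm" and p :: "real ^ 'm" and r :: real
    and S :: "(real ^ 'n) set" and xhat :: "real ^ 'n"
  assumes rank: "rank Q = CARD('n)"
    and r_pos: "r > 0"
    and S_def: "S = {x. norm (Q *v x - p) \<le> r}"
    and nonempty: "S \<inter> int_vecs \<noteq> {}"
    and bdry: "xhat \<in> frontier S"
  shows "(INF z\<in>S \<inter> int_vecs. norm (z - xhat))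
           \<le> 2 * spec_norm (Q ** matrix_inv (transpose Q ** Q)) * covering_radius Q
         \<and> (\<forall>\<alpha> :: real ^ 'n.
           (INF z\<in>S \<inter> int_vecs. \<alpha> \<bullet> z) - (INF x\<in>S. \<alpha> \<bullet> x)
             \<le> 2 * spec_norm (Q ** matrix_inv (transpose Q ** Q)) * norm \<alpha> * covering_radius Q)"
proof -
  define C where "C = spec_norm (Q ** matrix_inv (transpose Q ** Q))"
  define mu where "mu = covering_radius Q"
  have C0: "C \<ge> 0" unfolding C_def by (rule spec_nonneg)
  have Cb: "norm v \<le> C * norm (Q *v v)" for v unfolding C_def by (rule pinv_bound[OF rank])
  have Sne: "S \<noteq> {}" using nonempty by blast
  obtain c R where R0: "R \<ge> 0" and memS: "\<And>y. y \<in> S \<longleftrightarrow> norm (Q *v (y - c)) \<le> R"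
    using center[OF rank S_def Sne] by blast
  have K: "\<exists>z\<in>S \<inter> int_vecs. norm (z - x) \<le> 2 * C * t" if hx: "x \<in> S" and ht: "mu < t" for x t
  proof -
    obtain z where z: "z \<in> S \<inter> int_vecs" "norm (Q *v (z - x)) \<le> 2 * t"
      using key[OF memS nonempty hx] ht unfolding mu_def by blast
    have "norm (z - x) \<le> C * norm (Q *v (z - x))" by (rule Cb)
    also have "\<dots> \<le> C * (2 * t)" by (rule mult_left_mono[OF z(2) C0])
    finally show ?thesis using z(1) by (auto simp: ac_simps)
  qed
  have bnd: "norm x \<le> norm c + C * R" if "x \<in> S" for x
  proof -
    have "norm (x - c) \<le> C * norm (Q *v (x - c))" by (rule Cb)
    also have "\<dots> \<le> C * R" using memS that C0 by (simp add: mult_left_mono)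
    finally show ?thesis by (metis add.commute diff_add_cancel norm_triangle_le add_left_mono)
  qed
  have closedS: "closed S" unfolding S_def
    by (intro closed_Collect_le continuous_intros) 
  have xhatS: "xhat \<in> S" using bdry closedS frontier_subset_closed by blast
  have part1: "(INF z\<in>S \<inter> int_vecs. norm (z - xhat)) \<le> 2 * C * mu"
  proof (rule eps_le)
    show "0 \<le> 2 * C" using C0 by simp
    fix t assume "mu < t"
    then obtain z where z: "z \<in> S \<inter> int_vecs" "norm (z - xhat) \<le> 2 * C * t"
      using K[OF xhatS] by blast
    have "(INF z\<in>S \<inter> int_vecs. norm (z - xhat)) \<le> norm (z - xhat)"
      by (rule cINF_lower[OF _ z(1)]) (rule bdd_belowI2[of _ 0], simp)
    thus "(INF z\<in>S \<inter> int_vecs. norm (z - xhat)) \<le> 2 * C * t" using z(2) by simp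
  qed
  have part2: "(INF z\<in>S \<inter> int_vecs. \<alpha> \<bullet> z) - (INF x\<in>S. \<alpha> \<bullet> x) \<le> 2 * C * norm \<alpha> * mu"
    for \<alpha> :: "real ^ 'n"
  proof (rule eps_le)
    show "0 \<le> 2 * C * norm \<alpha>" using C0 by simp
    fix t assume t: "mu < t"
    have bb: "bdd_below ((\<lambda>z. \<alpha> \<bullet> z) ` (S \<inter> int_vecs))"
    proof (rule bdd_belowI2[of _ "- (norm \<alpha> * (norm c + C * R))"])
      fix z assume "z \<in> S \<inter> int_vecs"
      hence "norm z \<le> norm c + C * R" using bnd by blast
      hence "norm \<alpha> * norm z \<le> norm \<alpha> * (norm c + C * R)" by (simp add: mult_left_mono)
      moreover have "- (\<alpha> \<bullet> z) \<le> norm \<alpha> * norm z"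
        by (metis inner_minus_left norm_cauchy_schwarz norm_minus_cancel)
      ultimately show "- (norm \<alpha> * (norm c + C * R)) \<le> \<alpha> \<bullet> z" by linarith
    qed
    have "(INF z\<in>S \<inter> int_vecs. \<alpha> \<bullet> z) - 2 * C * norm \<alpha> * t \<le> \<alpha> \<bullet> x" if x: "x \<in> S" for x
    proof -
      obtain z where z: "z \<in> S \<inter> int_vecs" "norm (z - x) \<le> 2 * C * t" using K[OF x t] by blast
      have "(INF z\<in>S \<inter> int_vecs. \<alpha> \<bullet> z) \<le> \<alpha> \<bullet> z" by (rule cINF_lower[OF bb z(1)])
      also have "\<alpha> \<bullet> z = \<alpha> \<bullet> x + \<alpha> \<bullet> (z - x)" by (simp add: inner_diff_right)
      also have "\<alpha> \<bullet> (z - x) \<le> norm \<alpha> * norm (z - x)" by (rule norm_cauchy_schwarz)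
      also have "\<dots> \<le> norm \<alpha> * (2 * C * t)" by (rule mult_left_mono[OF z(2)]) simp
      finally show ?thesis by (simp add: ac_simps)
    qed
    hence "(INF z\<in>S \<inter> int_vecs. \<alpha> \<bullet> z) - 2 * C * norm \<alpha> * t \<le> (INF x\<in>S. \<alpha> \<bullet> x)"
      by (intro cINF_greatest Sne) 
    thus "(INF z\<in>S \<inter> int_vecs. \<alpha> \<bullet> z) - (INF x\<in>S. \<alpha> \<bullet> x) \<le> 2 * C * norm \<alpha> * t" by simp
  qed
  show ?thesis using part1 part2 unfolding C_def mu_def by blast
qed

end
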